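(* Let $\mathcal H$ be a Hilbert space of finite dimension $d$, let $\{|i\rangle\}_{i=1}^d$ be a fixed orthonormal (incoherent) basis, and let $\mathcal L\colon\mathcal B(\mathcal H)\to\mathcal B(\mathcal H)$ be a time-independent generator of a quantum dynamics, i.e. a linear, trace-preserving and Hermiticity-preserving map, with associated propagators $\mathcal E_{t_2,t_1}=e^{(t_2-t_1)\mathcal L}$ for $t_2\ge t_1\ge 0$. Then the dynamics is NCGD if and only if $$\mathcal L_{\mathrm{pc}}\,\mathcal L_{\mathrm{cc}}^{\,j}\,\mathcal L_{\mathrm{cp}}=0\quad\text{for all } j\in\{0,1,\dots,d^2-d-1\}.$$
   Context: $\mathcal B(\mathcal H)$ is the space of (bounded) linear operators on $\mathcal H$. The complete dephasing map is $\Delta(X)=\sum_{i=1}^d |i\rangle\langle i|X|i\rangle\langle i|$. Set $\mathcal B_{\mathrm p}(\mathcal H)=\operatorname{Image}(\Delta)$ (diagonal operators, "populations") and $\mathcal B_{\mathrm c}(\mathcal H)=\operatorname{Kernel}(\Delta)$ (off-diagonal operators, "coherences"), so $\mathcal B(\mathcal H)=\mathcal B_{\mathrm p}(\mathcal H)\oplus\mathcal B_{\mathrm c}(\mathcal H)$ (orthogonal w.r.t. the Hilbert–Schmidt inner product). With $\Pi_{\mathrm p}=\Delta$ and $\Pi_{\mathrm c}=\mathrm{id}-\Delta$, the blocks of a linear map $\mathcal L$ are $\mathcal L_{xy}=\Pi_x\mathcal L\Pi_y$ restricted to a map $\mathcal B_y(\mathcal H)\to\mathcal B_x(\mathcal H)$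 for $x,y\in\{\mathrm p,\mathrm c\}$ (e.g. $\mathcal L_{\mathrm{pc}}\colon\mathcal B_{\mathrm c}(\mathcal H)\to\mathcal B_{\mathrm p}(\mathcal H)$), so that $\mathcal L=\begin{pmatrix}\mathcal L_{\mathrm{pp}}&\mathcal L_{\mathrm{pc}}\\ \mathcal L_{\mathrm{cp}}&\mathcal L_{\mathrm{cc}}\end{pmatrix}$; $\mathcal L_{\mathrm{cc}}^0$ is the identity on $\mathcal B_{\mathrm c}(\mathcal H)$. A dynamics with propagators $\mathcal E_{t_2,t_1}$ ($t_2\ge t_1\ge0$) is called non-coherence-generating-and-detecting (NCGD) iff $\Delta\circ\mathcal E_{t_3,t_2}\circ\Delta\circ\mathcal E_{t_2,t_1}\circ\Delta=\Delta\circ\mathcal E_{t_3,t_1}\circ\Delta$ for all $t_3\ge t_2\ge t_1\ge 0$. *)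

theory Defs
  imports "HOL-Analysis.Analysis"
begin

text \<open>Operators on H = C^d (d = CARD('n)) in the fixed incoherent basis are d x d complex
matrices; superoperators (maps B(H) -> B(H)) are HOL functions on such matrices.\<close>

type_synonym 'n op = "complex^('n::finite)^'n"
type_synonym 'n superop = "'n op \<Rightarrow> 'n op"

definition op_smult :: "complex \<Rightarrow> ('n::finite) op \<Rightarrow> 'n op" where
  "op_smult c X = (\<chi> i j. c * X$i$j)"

definition op_adjoint :: "('n::finite) op \<Rightarrow> 'n op" where
  "op_adjoint X = (\<chi> i j. cnj (X$j$i))"

definition op_trace :: "('n::finite) op \<Rightarrow> complex" where
  "op_trace X = (\<Sum>i\<in>UNIV. X$i$i)"

definition clinear_superop :: "('n::finite) superop \<Rightarrow> bool" where
  "clinear_superop L \<longleftrightarrow> (\<forall>X Y. L (X + Y) = L X + L Y) \<and> (\<forall>c X. L (op_smult c X) = op_smult c (L X))"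

definition trace_preserving :: "('n::finite) superop \<Rightarrow> bool" where
  "trace_preserving L \<longleftrightarrow> (\<forall>X. op_trace (L X) = op_trace X)"

definition hermiticity_preserving :: "('n::finite) superop \<Rightarrow> bool" where
  "hermiticity_preserving L \<longleftrightarrow> (\<forall>X. L (op_adjoint X) = op_adjoint (L X))"

definition dephase :: "('n::finite) superop" where
  "dephase X = (\<chi> i j. if i = j then X$i$j else 0)"

definition proj_p :: "('n::finite) superop" where "proj_p = dephase"
definition proj_c :: "('n::finite) superop" where "proj_c X = X - dephase X"

text \<open>Blocks L_xy = Pi_x o L o Pi_y (extended by zero outside B_y).\<close>
definition blk_pc :: "('n::finite) superop \<Rightarrow> 'n superop" where "blk_pc L = proj_p \<circ> L \<circ> proj_c"
definition blk_cc :: "('n::finite) superop \<Rightarrow> 'n superop" where "blk_cc L = proj_c \<circ> L \<circ> proj_c"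
definition blk_cp :: "('n::finite) superop \<Rightarrow> 'n superop" where "blk_cp L = proj_c \<circ> L \<circ> proj_p"

definition superop_exp :: "real \<Rightarrow> ('n::finite) superop \<Rightarrow> 'n superop" where
  "superop_exp t L X = (\<Sum>k. (t ^ k / fact k) *\<^sub>R (L ^^ k) X)"

definition propagator :: "('n::finite) superop \<Rightarrow> real \<Rightarrow> real \<Rightarrow> ('n::finite) superop" where
  "propagator L t2 t1 = superop_exp (t2 - t1) L"

definition NCGD :: "(real \<Rightarrow> real \<Rightarrow> ('n::finite) superop) \<Rightarrow> bool" where
  "NCGD E \<longleftrightarrow> (\<forall>t1 t2 t3. 0 \<le> t1 \<and> t1 \<le> t2 \<and> t2 \<le> t3 \<longrightarrow>
      dephase \<circ> E t3 t2 \<circ> dephase \<circ> E t2 t1 \<circ> dephase = dephase \<circ> E t3 t1 \<circ> dephase)"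

end

theory Submission
  imports Defs "HOL-Analysis.Analysis"
begin

lemma dephase_add: "dephase (X + Y) = dephase X + dephase (Y::'n::finite op)"
  by (simp add: dephase_def vec_eq_iff)
lemma dephase_scaleR: "dephase (r *\<^sub>R (X::'n::finite op)) = r *\<^sub>R dephase X"
  by (simp add: dephase_def vec_eq_iff)
lemma dephase_smult: "dephase (op_smult c (X::'n::finite op)) = op_smult c (dephase X)"
  by (simp add: dephase_def op_smult_def vec_eq_iff)
lemma dephase_idem[simp]: "dephase (dephase (X::'n::finite op)) = dephase X"
  by (simp add: dephase_def vec_eq_iff)
lemma dephase_projc[simp]: "dephase (proj_c (X::'n::finite op)) = 0"
  by (simp add: dephase_def proj_c_def vec_eq_iff)
lemma projc_dephase[simp]: "proj_c (dephase (X::'n::finite op)) = 0"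
  by (simp add: dephase_def proj_c_def vec_eq_iff)
lemma projc_idem[simp]: "proj_c (proj_c (X::'n::finite op)) = proj_c X"
  by (simp add: dephase_def proj_c_def vec_eq_iff)
lemma dephase_plus_projc: "dephase X + proj_c (X::'n::finite op) = X"
  by (simp add: proj_c_def)
lemma projc_add: "proj_c (X + Y) = proj_c X + proj_c (Y::'n::finite op)"
  by (simp add: dephase_def proj_c_def vec_eq_iff)
lemma projc_smult: "proj_c (op_smult c (X::'n::finite op)) = op_smult c (proj_c X)"
  by (simp add: dephase_def proj_c_def op_smult_def vec_eq_iff algebra_simps)
lemma linear_dephase: "linear (dephase :: 'n::finite op \<Rightarrow> 'n op)"
  by (rule linearI) (simp_all add: dephase_add dephase_scaleR)
lemma linear_projc: "linear (proj_c :: 'n::finite op \<Rightarrow> 'n op)"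
  by (rule linearI) (simp_all add: proj_c_def dephase_add dephase_scaleR algebra_simps)
lemma cscaleR: "r *\<^sub>R (z::complex) = complex_of_real r * z"
  by (simp add: scaleR_conv_of_real)
lemma scaleR_smult: "r *\<^sub>R (X::'n::finite op) = op_smult (complex_of_real r) X"
  by (simp add: op_smult_def vec_eq_iff cscaleR)
lemma clinear_linear: "clinear_superop L \<Longrightarrow> linear L"
  by (rule linearI) (simp_all add: clinear_superop_def scaleR_smult)

lemma bl_test: "linear (f::'n::finite op \<Rightarrow> 'n op) \<Longrightarrow> bounded_linear f"
  using linear_conv_bounded_linear by blast

lemma bl_funpow: "bounded_linear (f::'a::real_normed_vector \<Rightarrow> 'a) \<Longrightarrow> bounded_linear (f ^^ k)"
proof (induction k)
  case 0
  show ?case using bounded_linear_ident by (simp add: id_def)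
next
  case (Suc k)
  have "f ^^ Suc k = (\<lambda>x. f ((f^^k) x))" by (simp add: fun_eq_iff)
  then show ?case
    using bounded_linear_compose[of f "f^^k"] Suc by simp
qed

lemma funpow_bound:
  assumes "bounded_linear (f::'a::real_normed_vector \<Rightarrow> 'a)"
  obtains K where "K > 0" "\<And>k x. norm ((f^^k) x) \<le> K^k * norm x"
proof -
  obtain K where K: "K>0" "\<And>x. norm (f x) \<le> norm x * K"
    using bounded_linear.pos_bounded[OF assms] by blast
  have "norm ((f^^k) x) \<le> K^k * norm x" for k x
  proof (induction k)
    case 0 show ?case by (simp add: funpow_0)
  next
    case (Suc k)
    have "norm ((f^^Suc k) x) = norm (f ((f^^k) x))" by simp
    also have "\<dots> \<le> norm ((f^^k) x) * K" by (rule K(2))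
    also have "\<dots> \<le> K^k * norm x * K" using Suc K(1) by (simp add: mult_right_mono)
    finally show ?case by (simp add: algebra_simps)
  qed
  with K(1) show ?thesis using that by blast
qed

definition gexp :: "real \<Rightarrow> ('a::real_normed_vector \<Rightarrow> 'a) \<Rightarrow> 'a \<Rightarrow> 'a" where
  "gexp t f x = (\<Sum>k. (t^k / fact k) *\<^sub>R (f^^k) x)"

lemma summable_exp_bound:
  assumes g: "bounded_linear g" and f: "bounded_linear (f::'a::real_normed_vector \<Rightarrow> 'a)"
  shows "summable (\<lambda>k. (\<bar>t\<bar>^k / fact k) * norm (g ((f^^k) x)))"
proof -
  obtain K where K: "K > 0" "\<And>k x. norm ((f^^k) x) \<le> K^k * norm x"
    using funpow_bound[OF f] by blast
  obtain Kg where Kg: "Kg>0" "\<And>x. norm (g x) \<le> norm x * Kg"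
    using bounded_linear.pos_bounded[OF g] by blast
  have s: "summable (\<lambda>k. inverse (fact k) * (\<bar>t\<bar> * K)^k * (norm x * Kg))"
    using summable_mult2[OF summable_exp[of "\<bar>t\<bar> * K"]] by simp
  show ?thesis
  proof (rule summable_comparison_test'[OF s])
    fix k :: nat
    have "norm (g ((f^^k) x)) \<le> K^k * norm x * Kg"
      using Kg(2)[of "(f^^k) x"] K(2)[of k x] Kg(1) by (meson mult_right_mono less_imp_le order_trans)
    then have "(\<bar>t\<bar>^k / fact k) * norm (g ((f^^k) x)) \<le> (\<bar>t\<bar>^k / fact k) * (K^k * norm x * Kg)"
      by (intro mult_left_mono) auto
    also have "\<dots> = inverse (fact k) * (\<bar>t\<bar> * K)^k * (norm x * Kg)"
      by (simp add: power_mult_distrib field_simps)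
    finally show "norm ((\<bar>t\<bar>^k / fact k) * norm (g ((f^^k) x))) \<le> inverse (fact k) * (\<bar>t\<bar> * K)^k * (norm x * Kg)"
      by simp
  qed
qed

lemma summable_gexp_terms:
  assumes f: "bounded_linear (f::'a::banach \<Rightarrow> 'a)"
  shows "summable (\<lambda>k. norm ((t^k / fact k) *\<^sub>R (f^^k) x))"
  using summable_exp_bound[OF bounded_linear_ident f, of t x]
  by (simp add: abs_mult power_abs)

lemma apply_gexp:
  assumes g: "bounded_linear g" and f: "bounded_linear (f::'a::banach \<Rightarrow> 'a)"
  shows "g (gexp t f x) = (\<Sum>k. (t^k / fact k) *\<^sub>R g ((f^^k) x))"
  unfolding gexp_def
  using bounded_linear.suminf[OF g summable_norm_cancel[OF summable_gexp_terms[OF f]]]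
    linear_cmul[OF bounded_linear.linear[OF g]] by simp

lemma gexp_blinfun:
  assumes f: "bounded_linear (f::'a::banach \<Rightarrow> 'a)"
  shows "summable (\<lambda>k. norm ((t^k / fact k) *\<^sub>R Blinfun (f^^k)))"
    and "gexp t f x = blinfun_apply (\<Sum>k. (t^k / fact k) *\<^sub>R Blinfun (f^^k)) x"
proof -
  obtain K where K: "K > 0" "\<And>k x. norm ((f^^k) x) \<le> K^k * norm x"
    using funpow_bound[OF f] by blast
  have nb: "norm (Blinfun (f^^k)) \<le> K^k" for k
    by (rule norm_blinfun_bound) (use K in \<open>auto simp: bounded_linear_Blinfun_apply[OF bl_funpow[OF f]]\<close>)
  have s: "summable (\<lambda>k. inverse (fact k) * (\<bar>t\<bar> * K)^k)"
    using summable_exp[of "\<bar>t\<bar> * K"] by simp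
  show sm: "summable (\<lambda>k. norm ((t^k / fact k) *\<^sub>R Blinfun (f^^k)))"
  proof (rule summable_comparison_test'[OF s])
    fix k :: nat
    have "norm ((t^k / fact k) *\<^sub>R Blinfun (f^^k)) = (\<bar>t\<bar>^k / fact k) * norm (Blinfun (f^^k))"
      by (simp add: power_abs)
    also have "\<dots> \<le> (\<bar>t\<bar>^k / fact k) * K^k" by (intro mult_left_mono nb) auto
    also have "\<dots> = inverse (fact k) * (\<bar>t\<bar> * K)^k" by (simp add: power_mult_distrib field_simps)
    finally show "norm (norm ((t^k / fact k) *\<^sub>R Blinfun (f^^k))) \<le> inverse (fact k) * (\<bar>t\<bar> * K)^k" by simp
  qed
  show "gexp t f x = blinfun_apply (\<Sum>k. (t^k / fact k) *\<^sub>R Blinfun (f^^k)) x"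
    unfolding gexp_def
    using bounded_linear.suminf[OF bounded_linear_apply_blinfun[of x] summable_norm_cancel[OF sm]]
    by (simp add: bounded_linear_Blinfun_apply[OF bl_funpow[OF f]] scaleR_blinfun.rep_eq)
qed

lemma bl_gexp:
  assumes f: "bounded_linear (f::'a::banach \<Rightarrow> 'a)"
  shows "bounded_linear (gexp t f)"
proof -
  have "gexp t f = blinfun_apply (\<Sum>k. (t^k / fact k) *\<^sub>R Blinfun (f^^k))"
    using gexp_blinfun(2)[OF f] by blast
  then show ?thesis by (simp add: blinfun.bounded_linear_right)
qed

lemma bilinear_Cauchy_product_sums:
  fixes a :: "nat \<Rightarrow> 'a::banach" and b :: "nat \<Rightarrow> 'b::banach"
  assumes bb: "bounded_bilinear (pr :: 'a \<Rightarrow> 'b \<Rightarrow> 'c::banach)"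
    and a: "summable (\<lambda>k. norm (a k))"
    and b: "summable (\<lambda>k. norm (b k))"
  shows "(\<lambda>k. \<Sum>i\<le>k. pr (a i) (b (k - i))) sums (pr (\<Sum>k. a k) (\<Sum>k. b k))"
proof -
  obtain K0 where K0: "\<And>x y. norm (pr x y) \<le> norm x * norm y * K0"
    using bounded_bilinear.bounded[OF bb] by blast
  define K where "K = max K0 1"
  have K: "\<And>x y. norm (pr x y) \<le> norm x * norm y * K" "K \<ge> 0"
  proof -
    fix x :: 'a and y :: 'b
    have "norm x * norm y * K0 \<le> norm x * norm y * max K0 1"
      by (intro mult_left_mono) auto
    then show "norm (pr x y) \<le> norm x * norm y * K" unfolding K_def using K0[of x y] by linarith
  next
    show "K \<ge> 0" unfolding K_def by simp
  qed
  let ?S1 = "\<lambda>n::nat. {..<n} \<times> {..<n}"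
  let ?S2 = "\<lambda>n::nat. {(i,j). i + j < n}"
  have S1_mono: "\<And>m n. m \<le> n \<Longrightarrow> ?S1 m \<subseteq> ?S1 n" by auto
  have S2_le_S1: "\<And>n. ?S2 n \<subseteq> ?S1 n" by auto
  have S1_le_S2: "\<And>n. ?S1 (n div 2) \<subseteq> ?S2 n" by auto
  have finite_S1: "\<And>n. finite (?S1 n)" by simp
  with S2_le_S1 have finite_S2: "\<And>n. finite (?S2 n)" by (rule finite_subset)
  let ?g = "\<lambda>(i,j). pr (a i) (b j)"
  let ?f = "\<lambda>(i,j). norm (a i) * norm (b j) * K"
  have f_nonneg: "\<And>x. 0 \<le> ?f x" using K(2) by auto
  then have norm_sum_f: "\<And>A. norm (sum ?f A) = sum ?f A"
    unfolding real_norm_def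
    by (simp only: abs_of_nonneg sum_nonneg [rule_format])
  have sp: "pr (sum a A) (sum b B) = (\<Sum>i\<in>A. \<Sum>j\<in>B. pr (a i) (b j))" for A B
    by (simp add: bounded_bilinear.sum_left[OF bb] bounded_bilinear.sum_right[OF bb] sum.swap[of _ B])
  have "(\<lambda>n. pr (\<Sum>k<n. a k) (\<Sum>k<n. b k)) \<longlonglongrightarrow> pr (\<Sum>k. a k) (\<Sum>k. b k)"
    by (intro bounded_bilinear.tendsto[OF bb] summable_LIMSEQ summable_norm_cancel [OF a] summable_norm_cancel [OF b])
  then have 1: "(\<lambda>n. sum ?g (?S1 n)) \<longlonglongrightarrow> pr (\<Sum>k. a k) (\<Sum>k. b k)"
    by (simp only: sp sum.cartesian_product)
  have "(\<lambda>n. (\<Sum>k<n. norm (a k)) * (\<Sum>k<n. norm (b k)) * K) \<longlonglongrightarrow> (\<Sum>k. norm (a k)) * (\<Sum>k. norm (b k)) * K"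
    using a b by (intro tendsto_mult summable_LIMSEQ tendsto_const)
  then have "(\<lambda>n. sum ?f (?S1 n)) \<longlonglongrightarrow> (\<Sum>k. norm (a k)) * (\<Sum>k. norm (b k)) * K"
  proof -
    have "sum ?f (?S1 n) = (\<Sum>k<n. norm (a k)) * (\<Sum>k<n. norm (b k)) * K" for n
      by (simp only: sum.cartesian_product[symmetric] case_prod_conv) (simp add: sum_distrib_left sum_distrib_right, rule sum.swap)
    then show "(\<lambda>n. (\<Sum>k<n. norm (a k)) * (\<Sum>k<n. norm (b k)) * K) \<longlonglongrightarrow> (\<Sum>k. norm (a k)) * (\<Sum>k. norm (b k)) * K \<Longrightarrow> ?thesis"
      by simp
  qed
  then have "convergent (\<lambda>n. sum ?f (?S1 n))"
    by (rule convergentI)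
  then have Cauchy: "Cauchy (\<lambda>n. sum ?f (?S1 n))"
    by (rule convergent_Cauchy)
  have "Zfun (\<lambda>n. sum ?f (?S1 n - ?S2 n)) sequentially"
  proof (rule ZfunI, simp only: eventually_sequentially norm_sum_f)
    fix r :: real
    assume r: "0 < r"
    from CauchyD [OF Cauchy r] obtain N
      where "\<forall>m\<ge>N. \<forall>n\<ge>N. norm (sum ?f (?S1 m) - sum ?f (?S1 n)) < r" ..
    then have "\<And>m n. N \<le> n \<Longrightarrow> n \<le> m \<Longrightarrow> norm (sum ?f (?S1 m - ?S1 n)) < r"
      by (simp only: sum_diff finite_S1 S1_mono)
    then have N: "\<And>m n. N \<le> n \<Longrightarrow> n \<le> m \<Longrightarrow> sum ?f (?S1 m - ?S1 n) < r"
      by (simp only: norm_sum_f)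
    show "\<exists>N. \<forall>n\<ge>N. sum ?f (?S1 n - ?S2 n) < r"
    proof (intro exI allI impI)
      fix n
      assume "2 * N \<le> n"
      then have n: "N \<le> n div 2" by simp
      have "sum ?f (?S1 n - ?S2 n) \<le> sum ?f (?S1 n - ?S1 (n div 2))"
        by (intro sum_mono2 finite_Diff finite_S1 f_nonneg Diff_mono subset_refl S1_le_S2)
      also have "\<dots> < r"
        using n div_le_dividend by (rule N)
      finally show "sum ?f (?S1 n - ?S2 n) < r" .
    qed
  qed
  then have "Zfun (\<lambda>n. sum ?g (?S1 n - ?S2 n)) sequentially"
    apply (rule Zfun_le [rule_format])
    apply (simp only: norm_sum_f)
    apply (rule order_trans [OF norm_sum sum_mono])
    apply (auto simp add: K(1))
    done
  then have 2: "(\<lambda>n. sum ?g (?S1 n) - sum ?g (?S2 n)) \<longlonglongrightarrow> 0"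
    unfolding tendsto_Zfun_iff diff_0_right
    by (simp only: sum_diff finite_S1 S2_le_S1)
  with 1 have "(\<lambda>n. sum ?g (?S2 n)) \<longlonglongrightarrow> pr (\<Sum>k. a k) (\<Sum>k. b k)"
    by (rule Lim_transform2)
  then show ?thesis
    by (simp only: sums_def sum.triangle_reindex)
qed

lemma gexp_add:
  assumes f: "bounded_linear (f::'a::banach \<Rightarrow> 'a)"
  shows "gexp s f (gexp u f x) = gexp (s + u) f x"
proof -
  define A where "A = (\<lambda>k. (s^k / fact k) *\<^sub>R Blinfun (f^^k))"
  define B where "B = (\<lambda>k. (u^k / fact k) *\<^sub>R (f^^k) x)"
  have sA: "summable (\<lambda>k. norm (A k))" unfolding A_def by (rule gexp_blinfun(1)[OF f])
  have sB: "summable (\<lambda>k. norm (B k))" unfolding B_def by (rule summable_gexp_terms[OF f])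
  have "gexp s f (gexp u f x) = blinfun_apply (\<Sum>k. A k) (\<Sum>k. B k)"
    unfolding A_def B_def using gexp_blinfun(2)[OF f, of s] by (simp add: gexp_def)
  also have "\<dots> = (\<Sum>k. \<Sum>i\<le>k. blinfun_apply (A i) (B (k - i)))"
    using bilinear_Cauchy_product_sums[OF bounded_bilinear_blinfun_apply sA sB] by (simp add: sums_iff)
  also have "\<dots> = (\<Sum>k. ((s+u)^k / fact k) *\<^sub>R (f^^k) x)"
  proof (rule suminf_cong)
    fix k
    have "(\<Sum>i\<le>k. blinfun_apply (A i) (B (k - i))) = (\<Sum>i\<le>k. ((s^i / fact i) * (u^(k-i) / fact (k-i))) *\<^sub>R (f^^k) x)"
    proof (rule sum.cong[OF refl])
      fix i assume "i \<in> {..k}"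
      then have ik: "i + (k - i) = k" by simp
      have "(f^^i) ((f^^(k-i)) x) = (f^^k) x"
        using funpow_add[of i "k-i" f] ik by (metis comp_apply)
      then show "blinfun_apply (A i) (B (k - i)) = ((s^i / fact i) * (u^(k-i) / fact (k-i))) *\<^sub>R (f^^k) x"
        unfolding A_def B_def
        by (simp add: scaleR_blinfun.rep_eq bounded_linear_Blinfun_apply[OF bl_funpow[OF f]]
            linear_cmul[OF bounded_linear.linear[OF bl_funpow[OF f]]])
    qed
    also have "\<dots> = (\<Sum>i\<le>k. (s^i / fact i) * (u^(k-i) / fact (k-i))) *\<^sub>R (f^^k) x"
      by (simp add: scaleR_sum_left)
    also have "(\<Sum>i\<le>k. (s^i / fact i) * (u^(k-i) / fact (k-i))) = (s+u)^k / fact k"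
      using exp_series_add_commuting[of s u k] by (simp add: divide_inverse mult.commute)
    finally show "(\<Sum>i\<le>k. blinfun_apply (A i) (B (k - i))) = ((s+u)^k / fact k) *\<^sub>R (f^^k) x" .
  qed
  also have "\<dots> = gexp (s + u) f x" by (simp add: gexp_def)
  finally show ?thesis .
qed

lemma powser_vanish:
  fixes c :: "nat \<Rightarrow> 'a::banach"
  assumes sm: "\<And>t. t > 0 \<Longrightarrow> summable (\<lambda>n. t^n * norm (c n))"
    and z: "\<And>t. t > 0 \<Longrightarrow> (\<Sum>n. t^n *\<^sub>R c n) = 0"
  shows "c m = 0"
proof (induction m rule: less_induct)
  case (less m)
  have sm0: "summable (\<lambda>n. norm (c n))" using sm[of 1] by simp
  have sm1: "summable (\<lambda>n. norm (c (Suc n + m)))"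
    using summable_ignore_initial_segment[OF sm0, of "Suc m"] by (simp add: add.commute add.left_commute)
  define A where "A = (\<Sum>n. norm (c (Suc n + m)))"
  have A0: "A \<ge> 0" unfolding A_def by (rule suminf_nonneg[OF sm1]) simp
  have key: "norm (c m) \<le> t * A" if t: "0 < t" "t \<le> 1" for t
  proof -
    have nt: "norm (t^n *\<^sub>R c n) = t^n * norm (c n)" for n using t by simp
    have st: "summable (\<lambda>n. t^n *\<^sub>R c n)"
      by (rule summable_norm_cancel) (use sm[OF t(1)] t in \<open>simp add: abs_of_nonneg\<close>)
    have tle: "t^n \<le> 1" for n using t by (simp add: power_le_one)
    have sg: "summable (\<lambda>n. norm (t^n *\<^sub>R c (n + m)))"
    proof (rule summable_comparison_test'[OF summable_ignore_initial_segment[OF sm0, of m]])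
      fix n
      show "norm (norm (t^n *\<^sub>R c (n + m))) \<le> norm (c (n + m))"
        using tle[of n] t by (simp add: mult_left_le_one_le)
    qed
    have "0 = (\<Sum>n. t^n *\<^sub>R c n)" using z t by simp
    also have "\<dots> = (\<Sum>n. t^(n+m) *\<^sub>R c (n+m))"
      using suminf_split_initial_segment[OF st, of m] less by simp
    also have "\<dots> = (\<Sum>n. t^m *\<^sub>R (t^n *\<^sub>R c (n+m)))"
      by (simp add: power_add mult.commute)
    also have "\<dots> = t^m *\<^sub>R (\<Sum>n. t^n *\<^sub>R c (n+m))"
      by (rule suminf_scaleR_right[symmetric]) (rule summable_norm_cancel[OF sg])
    finally have s0: "(\<Sum>n. t^n *\<^sub>R c (n+m)) = 0" using t by simp
    have sgS: "summable (\<lambda>n. norm (t^(Suc n) *\<^sub>R c (Suc n + m)))"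
      using summable_ignore_initial_segment[OF sg, of 1] by simp
    have "(\<Sum>n. t^(Suc n) *\<^sub>R c (Suc n + m)) = (\<Sum>n. t^n *\<^sub>R c (n+m)) - c m"
      using suminf_split_head[OF summable_norm_cancel[OF sg]] by simp
    then have "norm (c m) = norm (\<Sum>n. t^(Suc n) *\<^sub>R c (Suc n + m))"
      using s0 by simp
    also have "\<dots> \<le> (\<Sum>n. norm (t^(Suc n) *\<^sub>R c (Suc n + m)))"
      by (rule summable_norm[OF sgS])
    also have "\<dots> \<le> (\<Sum>n. t * norm (c (Suc n + m)))"
    proof (rule suminf_le[OF _ sgS summable_mult[OF sm1]])
      fix n
      have "t * t^n \<le> t" using tle[of n] t by (simp add: mult_left_le_one_le mult.commute)
      then show "norm (t^(Suc n) *\<^sub>R c (Suc n + m)) \<le> t * norm (c (Suc n + m))"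
        using t by (simp add: mult_right_mono)
    qed
    also have "\<dots> = t * A" unfolding A_def by (rule suminf_mult[OF sm1])
    finally show ?thesis .
  qed
  show ?case
  proof (rule ccontr)
    assume "c m \<noteq> 0"
    then have np: "norm (c m) > 0" by simp
    define t where "t = min 1 (norm (c m) / (A + 1))"
    have t: "0 < t" "t \<le> 1" using np A0 by (auto simp: t_def)
    have "t * A \<le> norm (c m) / (A + 1) * A"
      using A0 by (intro mult_right_mono) (auto simp: t_def)
    also have "\<dots> < norm (c m)"
      using np A0 by (simp add: field_simps)
    finally show False using key[OF t] by simp
  qed
qed

lemma exp_powser_vanish:
  fixes v :: "nat \<Rightarrow> 'a::banach"
  assumes sm: "\<And>t. t > 0 \<Longrightarrow> summable (\<lambda>n. \<bar>t\<bar>^n / fact n * norm (v n))"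
    and z: "\<And>t. t > 0 \<Longrightarrow> (\<Sum>n. (t^n / fact n) *\<^sub>R v n) = 0"
  shows "v m = 0"
proof -
  have "(\<lambda>n. (1 / fact n) *\<^sub>R v n) m = 0"
  proof (rule powser_vanish)
    fix t :: real assume t: "t > 0"
    show "summable (\<lambda>n. t^n * norm ((1 / fact n) *\<^sub>R v n))"
      using sm[OF t] t by simp
    show "(\<Sum>n. t^n *\<^sub>R (1 / fact n) *\<^sub>R v n) = 0"
      using z[OF t] by simp
  qed
  then show ?thesis by simp
qed

lemma linear_funpow: "linear (f::'a::real_vector \<Rightarrow> 'a) \<Longrightarrow> linear (f ^^ k)"
proof (induction k)
  case 0 show ?case using linear_id by (simp add: id_def)
next
  case (Suc k)
  have "linear (f \<circ> (f^^k))" using linear_compose[of "f^^k" f] Suc by simp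
  moreover have "f ^^ Suc k = f \<circ> (f^^k)" by simp
  ultimately show ?case by metis
qed

lemma blk_pc_eq: "blk_pc L Y = dephase (L (proj_c Y))"
  by (simp add: blk_pc_def proj_p_def)
lemma blk_cp_eq: "blk_cp L Y = proj_c (L (dephase Y))"
  by (simp add: blk_cp_def proj_p_def)
lemma blk_cc_eq: "blk_cc L Y = proj_c (L (proj_c Y))"
  by (simp add: blk_cc_def)

lemma linear_blk_cc: "linear L \<Longrightarrow> linear (blk_cc (L::'n::finite superop))"
  unfolding blk_cc_def using linear_compose linear_projc by blast
lemma linear_blk_pc: "linear L \<Longrightarrow> linear (blk_pc (L::'n::finite superop))"
  unfolding blk_pc_def proj_p_def using linear_compose linear_projc linear_dephase by blast

lemma projc_L_step:
  assumes lin: "linear (L::'n::finite superop)"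
  shows "proj_c (L W) = blk_cp L W + blk_cc L (proj_c W)"
proof -
  have "L W = L (dephase W) + L (proj_c W)"
    using linear_add[OF lin] dephase_plus_projc[of W] by metis
  then show ?thesis by (simp add: blk_cp_eq blk_cc_eq projc_add)
qed

lemma paths_A1:
  assumes lin: "linear (L::'n::finite superop)"
    and H: "\<And>j X. blk_pc L ((blk_cc L ^^ j) (blk_cp L X)) = 0"
  shows "dephase ((L^^a) (proj_c ((L^^b) (dephase X)))) = 0"
proof -
  define S where "S = {Y. proj_c Y = Y \<and> (\<forall>j. dephase (L (proj_c ((blk_cc L ^^ j) Y))) = 0)}"
  have lincc: "linear (blk_cc L ^^ j)" for j by (rule linear_funpow[OF linear_blk_cc[OF lin]])
  have S_cp: "blk_cp L Z \<in> S" for Z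
    using H unfolding S_def by (simp add: blk_cp_eq blk_pc_eq)
  have S_cc: "blk_cc L Y \<in> S" if "Y \<in> S" for Y
  proof -
    have m: "proj_c Y = Y" "\<And>j. dephase (L (proj_c ((blk_cc L ^^ j) Y))) = 0" using that S_def by auto
    have "dephase (L (proj_c ((blk_cc L ^^ j) (blk_cc L Y)))) = 0" for j
      using m(2)[of "Suc j"] by (simp only: funpow_Suc_right o_apply)
    moreover have "proj_c (blk_cc L Y) = blk_cc L Y" by (simp add: blk_cc_eq)
    ultimately show ?thesis unfolding S_def by blast
  qed
  have S_add: "Y + Z \<in> S" if "Y \<in> S" "Z \<in> S" for Y Z
    using that unfolding S_def
    by (simp add: projc_add linear_add[OF lincc] linear_add[OF lin] dephase_add)
  have S_0: "0 \<in> S"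
    unfolding S_def by (simp add: linear_0[OF lincc] linear_0[OF lin] linear_0[OF linear_projc] linear_0[OF linear_dephase])
  have C3: "dephase ((L^^a) Y) = 0" if "Y \<in> S" for a Y
    using that
  proof (induction a arbitrary: Y)
    case 0
    then have "dephase Y = dephase (proj_c Y)" unfolding S_def by simp
    then show ?case by simp
  next
    case (Suc a)
    have d0: "dephase (L Y) = 0"
    proof -
      have "proj_c Y = Y" "dephase (L (proj_c ((blk_cc L ^^ 0) Y))) = 0"
        using Suc.prems unfolding S_def by blast+
      then show ?thesis by simp
    qed
    have "L Y = dephase (L Y) + proj_c (L Y)" by (simp add: dephase_plus_projc)
    also have "\<dots> = blk_cc L Y" using d0 Suc.prems unfolding S_def by (simp add: blk_cc_eq)
    finally have "(L^^Suc a) Y = (L^^a) (blk_cc L Y)"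
      by (simp only: funpow_Suc_right o_apply)
    then show ?case using Suc.IH[OF S_cc[OF Suc.prems]] by simp
  qed
  have C4: "proj_c ((L^^b) (dephase X)) \<in> S" for b
  proof (induction b)
    case 0 show ?case using S_0 by simp
  next
    case (Suc b)
    have "proj_c ((L^^Suc b) (dephase X)) = blk_cp L ((L^^b) (dephase X)) + blk_cc L (proj_c ((L^^b) (dephase X)))"
      using projc_L_step[OF lin] by simp
    then show ?case using S_add S_cp S_cc[OF Suc.IH] by simp
  qed
  show ?thesis using C3[OF C4] .
qed

lemma paths_A2:
  assumes lin: "linear (L::'n::finite superop)"
    and H: "\<And>a b X. dephase ((L^^a) (proj_c ((L^^b) (dephase X)))) = 0"
  shows "blk_pc L ((blk_cc L ^^ j) (blk_cp L X)) = 0"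
proof (induction j arbitrary: X rule: less_induct)
  case (less j)
  have lincc: "linear (blk_cc L ^^ k)" for k by (rule linear_funpow[OF linear_blk_cc[OF lin]])
  have linpc: "linear (blk_pc L)" by (rule linear_blk_pc[OF lin])
  define Y where "Y = (\<lambda>i. (L^^i) (dephase X))"
  define R where "R = (\<lambda>i. (blk_cc L ^^ (j - i)) (proj_c (Y (Suc i))))"
  have step: "blk_pc L (R (Suc i)) = blk_pc L (R i)" if "i < j" for i
  proof -
    have YS: "Y (Suc (Suc i)) = L (Y (Suc i))" unfolding Y_def by simp
    have ji: "j - i = Suc (j - Suc i)" using that by simp
    have "R (Suc i) = (blk_cc L ^^ (j - Suc i)) (blk_cp L (Y (Suc i)) + blk_cc L (proj_c (Y (Suc i))))"
      unfolding R_def YS using projc_L_step[OF lin] by simp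
    also have "\<dots> = (blk_cc L ^^ (j - Suc i)) (blk_cp L (Y (Suc i))) + R i"
      unfolding R_def ji by (simp only: linear_add[OF lincc] funpow_Suc_right o_apply)
    finally have "blk_pc L (R (Suc i)) = blk_pc L ((blk_cc L ^^ (j - Suc i)) (blk_cp L (Y (Suc i)))) + blk_pc L (R i)"
      by (simp add: linear_add[OF linpc])
    also have "blk_pc L ((blk_cc L ^^ (j - Suc i)) (blk_cp L (Y (Suc i)))) = 0"
      using less.IH[of "j - Suc i"] that by simp
    finally show ?thesis by simp
  qed
  have allR: "i \<le> j \<Longrightarrow> blk_pc L (R i) = blk_pc L (R 0)" for i
    by (induction i) (auto simp: step)
  have "blk_pc L (R j) = 0"
    using H[of 1 "Suc j" X] unfolding R_def Y_def by (simp add: blk_pc_eq)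
  moreover have "R 0 = (blk_cc L ^^ j) (blk_cp L X)"
    unfolding R_def Y_def by (simp add: blk_cp_eq)
  ultimately show ?case using allR[of j] by simp
qed

lemma propagator_gexp: "propagator L t2 t1 = gexp (t2 - t1) L"
  by (simp add: propagator_def superop_exp_def gexp_def fun_eq_iff)

lemma NCGD_iff_gexp:
  assumes bl: "bounded_linear (L::'n::finite superop)"
  shows "NCGD (propagator L) \<longleftrightarrow>
    (\<forall>s u X. 0 \<le> s \<longrightarrow> 0 \<le> u \<longrightarrow> dephase (gexp s L (proj_c (gexp u L (dephase X)))) = 0)"
proof -
  have dec: "dephase (gexp s L (gexp u L Z)) =
      dephase (gexp s L (dephase (gexp u L Z))) + dephase (gexp s L (proj_c (gexp u L Z)))" for s u Z
  proof -
    have lg: "linear (gexp s L)" using bl_gexp[OF bl] bounded_linear.linear by blast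
    have "gexp s L (gexp u L Z) = gexp s L (dephase (gexp u L Z) + proj_c (gexp u L Z))"
      by (simp add: dephase_plus_projc)
    also have "\<dots> = gexp s L (dephase (gexp u L Z)) + gexp s L (proj_c (gexp u L Z))"
      by (rule linear_add[OF lg])
    finally show ?thesis by (simp add: dephase_add)
  qed
  show ?thesis
  proof
    assume N: "NCGD (propagator L)"
    show "\<forall>s u X. 0 \<le> s \<longrightarrow> 0 \<le> u \<longrightarrow> dephase (gexp s L (proj_c (gexp u L (dephase X)))) = 0"
    proof (intro allI impI)
      fix s u :: real and X assume su: "0 \<le> s" "0 \<le> u"
      have "(dephase \<circ> propagator L (s+u) u \<circ> dephase \<circ> propagator L u 0 \<circ> dephase) X =
            (dephase \<circ> propagator L (s+u) 0 \<circ> dephase) X"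
      proof -
        have "0 \<le> (0::real) \<and> 0 \<le> u \<and> u \<le> s + u" using su by simp
        from N[unfolded NCGD_def, rule_format, OF this] show ?thesis by simp
      qed
      then have "dephase (gexp s L (dephase (gexp u L (dephase X)))) = dephase (gexp s L (gexp u L (dephase X)))"
        by (simp add: propagator_gexp gexp_add[OF bl])
      then show "dephase (gexp s L (proj_c (gexp u L (dephase X)))) = 0"
        using dec[of s u "dephase X"] by simp
    qed
  next
    assume Z: "\<forall>s u X. 0 \<le> s \<longrightarrow> 0 \<le> u \<longrightarrow> dephase (gexp s L (proj_c (gexp u L (dephase X)))) = 0"
    show "NCGD (propagator L)"
      unfolding NCGD_def
    proof (intro allI impI ext)
      fix t1 t2 t3 :: real and X assume t: "0 \<le> t1 \<and> t1 \<le> t2 \<and> t2 \<le> t3"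
      have e: "t3 - t1 = (t3 - t2) + (t2 - t1)" by simp
      have "dephase (gexp (t3 - t1) L (dephase X)) = dephase (gexp (t3 - t2) L (gexp (t2 - t1) L (dephase X)))"
        by (simp only: e gexp_add[OF bl])
      then show "(dephase \<circ> propagator L t3 t2 \<circ> dephase \<circ> propagator L t2 t1 \<circ> dephase) X =
            (dephase \<circ> propagator L t3 t1 \<circ> dephase) X"
        using dec[of "t3 - t2" "t2 - t1" "dephase X"] Z t by (simp add: propagator_gexp)
    qed
  qed
qed

interpretation cv0: vector_space "op_smult :: complex \<Rightarrow> 'n::finite op \<Rightarrow> 'n op"
  by unfold_locales (simp_all add: op_smult_def vec_eq_iff algebra_simps)

definition eunit :: "'n::finite \<Rightarrow> 'n \<Rightarrow> 'n op" where
  "eunit a b = (\<chi> i j. if i = a \<and> j = b then 1 else 0)"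

definition eBasis :: "'n::finite op set" where
  "eBasis = (\<lambda>p. eunit (fst p) (snd p)) ` UNIV"

lemma eunit_eq_iff: "eunit a b = eunit c d \<longleftrightarrow> a = c \<and> b = d"
proof
  assume "eunit a b = eunit c d"
  then have "eunit a b $ a $ b = eunit c d $ a $ b" by simp
  then show "a = c \<and> b = d" by (simp add: eunit_def split: if_splits)
qed simp

lemma expand_sub:
  fixes X :: "'n::finite op"
  assumes "\<forall>p\<in>UNIV - D. X $ fst p $ snd p = 0"
  shows "X = (\<Sum>p\<in>D. op_smult (X $ fst p $ snd p) (eunit (fst p) (snd p)))"
proof -
  have "X = (\<Sum>p\<in>UNIV. op_smult (X $ fst p $ snd p) (eunit (fst p) (snd p)))"
  proof (simp add: vec_eq_iff sum_component op_smult_def eunit_def, intro allI)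
    fix i j
    have "(\<Sum>x\<in>UNIV. X $ fst x $ snd x * (if i = fst x \<and> j = snd x then 1 else 0)) =
          (\<Sum>x\<in>UNIV. if x = (i, j) then X $ i $ j else 0)"
      by (rule sum.cong) auto
    also have "\<dots> = X $ i $ j" by simp
    finally show "X $ i $ j = (\<Sum>x\<in>UNIV. X $ fst x $ snd x * (if i = fst x \<and> j = snd x then 1 else 0))" by simp
  qed
  also have "\<dots> = (\<Sum>p\<in>D. op_smult (X $ fst p $ snd p) (eunit (fst p) (snd p)))"
    by (rule sum.mono_neutral_right) (use assms in \<open>auto simp: op_smult_def vec_eq_iff\<close>)
  finally show ?thesis .
qed

lemma in_span_sub:
  fixes X :: "'n::finite op"
  assumes "\<forall>p\<in>UNIV - D. X $ fst p $ snd p = 0"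
  shows "X \<in> cv0.span ((\<lambda>p. eunit (fst p) (snd p)) ` D)"
  apply (subst expand_sub[OF assms])
  apply (rule cv0.span_sum)
  apply (rule cv0.span_scale)
  apply (rule cv0.span_base)
  apply auto
  done

lemma eBasis_indep: "cv0.independent (eBasis :: 'n::finite op set)"
proof (rule cv0.independent_if_scalars_zero)
  show "finite (eBasis :: 'n op set)" unfolding eBasis_def by simp
next
  fix f :: "'n op \<Rightarrow> complex" and x :: "'n op"
  assume s: "(\<Sum>x\<in>eBasis. op_smult (f x) x) = 0" and x: "x \<in> eBasis"
  obtain a b where xab: "x = eunit a b" using x unfolding eBasis_def by auto
  have ent: "y $ a $ b = (if y = eunit a b then 1 else 0)" if "y \<in> eBasis" for y :: "'n op"
  proof -
    from that obtain p where yp: "y = eunit (fst p) (snd p)" unfolding eBasis_def by blast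
    show ?thesis
    proof (cases "fst p = a \<and> snd p = b")
      case True then show ?thesis using yp by (simp add: eunit_def)
    next
      case False
      then have "y \<noteq> eunit a b" using yp eunit_eq_iff by metis
      moreover have "y $ a $ b = 0" using yp False by (auto simp: eunit_def)
      ultimately show ?thesis by simp
    qed
  qed
  have "0 = (\<Sum>y\<in>(eBasis :: 'n op set). op_smult (f y) y) $ a $ b" using s by simp
  also have "\<dots> = (\<Sum>y\<in>eBasis. f y * y $ a $ b)" by (simp add: sum_component op_smult_def)
  also have "\<dots> = (\<Sum>y\<in>eBasis. if y = eunit a b then f y else 0)"
    by (rule sum.cong) (auto simp: ent)
  also have "\<dots> = f (eunit a b)"
  proof -
    have "eunit a b \<in> (eBasis :: 'n op set)" unfolding eBasis_def by (rule image_eqI[of _ _ "(a,b)"]) auto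
    then show ?thesis using sum.delta[of "eBasis :: 'n op set" "eunit a b" f] by (simp add: eBasis_def)
  qed
  finally show "f x = 0" using xab by simp
qed

lemma eBasis_span: "cv0.span (eBasis :: 'n::finite op set) = UNIV"
  using in_span_sub[of UNIV] unfolding eBasis_def by auto

interpretation cv: finite_dimensional_vector_space "op_smult :: complex \<Rightarrow> 'n::finite op \<Rightarrow> 'n op" eBasis
  apply unfold_locales
    apply (simp add: eBasis_def)
   apply (rule eBasis_indep)
  apply (rule eBasis_span)
  done

lemma card_offdiag: "card {p :: 'n::finite \<times> 'n. fst p \<noteq> snd p} = CARD('n)^2 - CARD('n)"
proof -
  have e: "{p :: 'n \<times> 'n. fst p \<noteq> snd p} = UNIV - range (\<lambda>a. (a, a))" by auto
  have "card (range (\<lambda>a::'n. (a, a))) = CARD('n)"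
    by (rule card_image) (auto simp: inj_on_def)
  moreover have "card (UNIV :: ('n \<times> 'n) set) = CARD('n) * CARD('n)"
    by (simp only: UNIV_Times_UNIV[symmetric] card_cartesian_product)
  ultimately show ?thesis unfolding e
    by (simp add: card_Diff_subset power2_eq_square)
qed


lemma smult_zero_vec[simp]: "op_smult 0 (X::'n::finite op) = 0"
  by (simp add: op_smult_def vec_eq_iff)

lemma krylov:
  fixes L :: "'n::finite superop"
  assumes cl: "clinear_superop L"
    and H: "\<forall>j \<in> {0..<CARD('n)^2 - CARD('n)}. blk_pc L \<circ> (blk_cc L ^^ j) \<circ> blk_cp L = (\<lambda>X. 0)"
  shows "blk_pc L ((blk_cc L ^^ j) (blk_cp L X)) = 0"
proof -
  define N where "N = CARD('n)^2 - CARD('n)"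
  let ?K = "blk_cc L"
  have Ladd: "L (x + y) = L x + L y" for x y using cl unfolding clinear_superop_def by blast
  have Lsm: "L (op_smult c x) = op_smult c (L x)" for c x using cl unfolding clinear_superop_def by blast
  have L0: "L 0 = 0" using Lsm[of 0 0] by simp
  have Kadd: "?K (x + y) = ?K x + ?K y" for x y by (simp add: blk_cc_eq projc_add Ladd)
  have Ksm: "?K (op_smult c x) = op_smult c (?K x)" for c x by (simp add: blk_cc_eq projc_smult Lsm)
  have K0: "?K 0 = 0" using Ksm[of 0 0] by simp
  have pcadd: "blk_pc L (x + y) = blk_pc L x + blk_pc L y" for x y by (simp add: blk_pc_eq projc_add Ladd dephase_add)
  have pcsm: "blk_pc L (op_smult c x) = op_smult c (blk_pc L x)" for c x by (simp add: blk_pc_eq projc_smult Lsm dephase_smult)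
  have pc0: "blk_pc L 0 = 0" using pcsm[of 0 0] by simp
  define G where "G = (\<lambda>i. range (\<lambda>X. (?K ^^ i) (blk_cp L X)))"
  define S where "S j = cv0.span (\<Union>i\<in>{..<j}. G i)" for j
  have Ssub: "cv0.subspace (S j)" for j unfolding S_def by (rule cv0.subspace_span)
  have Sspan: "cv0.span (S j) = S j" for j unfolding S_def by (rule cv0.span_span)
  have Smono: "S j \<subseteq> S k" if jk: "j \<le> k" for j k
  proof -
    have "(\<Union>i\<in>{..<j}. G i) \<subseteq> (\<Union>i\<in>{..<k}. G i)" using jk by (intro UN_mono) auto
    then show ?thesis unfolding S_def by (rule cv0.span_mono)
  qed
  have GS: "G i \<subseteq> S j" if ij: "i < j" for i j
  proof -
    have "G i \<subseteq> (\<Union>i\<in>{..<j}. G i)" using ij by auto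
    then show ?thesis unfolding S_def by (rule order_trans[OF _ cv0.span_superset])
  qed
  have KS: "?K ` S j \<subseteq> S (Suc j)" for j
  proof -
    have "S j \<subseteq> {Y. ?K Y \<in> S (Suc j)}"
      unfolding S_def[of j]
    proof (rule cv0.span_minimal)
      show "(\<Union>i\<in>{..<j}. G i) \<subseteq> {Y. ?K Y \<in> S (Suc j)}"
      proof
        fix Y assume "Y \<in> (\<Union>i\<in>{..<j}. G i)"
        then obtain i X where i: "i < j" and Y: "Y = (?K^^i) (blk_cp L X)" unfolding G_def by auto
        have "?K Y = (?K^^Suc i) (blk_cp L X)" using Y by simp
        then have "?K Y \<in> G (Suc i)" unfolding G_def by auto
        then show "Y \<in> {Y. ?K Y \<in> S (Suc j)}" using GS[of "Suc i" "Suc j"] i by auto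
      qed
      show "cv0.subspace {Y. ?K Y \<in> S (Suc j)}"
        using Ssub[of "Suc j"] unfolding cv0.subspace_def by (simp add: Kadd Ksm K0)
    qed
    then show ?thesis by auto
  qed
  have stab: "S (Suc (Suc j)) = S (Suc j)" if eq: "S (Suc j) = S j" for j
  proof -
    have "S (Suc (Suc j)) \<subseteq> S (Suc j)"
      unfolding S_def[of "Suc (Suc j)"]
    proof (rule cv0.span_minimal[OF _ Ssub])
      show "(\<Union>i\<in>{..<Suc (Suc j)}. G i) \<subseteq> S (Suc j)"
      proof
        fix Y assume "Y \<in> (\<Union>i\<in>{..<Suc (Suc j)}. G i)"
        then obtain i where i: "i < Suc (Suc j)" "Y \<in> G i" by auto
        show "Y \<in> S (Suc j)"
        proof (cases "i < Suc j")
          case True then show ?thesis using GS i by blast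
        next
          case False then have ij: "i = Suc j" using i by simp
          then obtain X where Y: "Y = (?K^^Suc j) (blk_cp L X)" using i unfolding G_def by auto
          have "(?K^^j) (blk_cp L X) \<in> S (Suc j)" using GS[of j "Suc j"] unfolding G_def by auto
          then have "(?K^^j) (blk_cp L X) \<in> S j" using eq by simp
          then have "?K ((?K^^j) (blk_cp L X)) \<in> S (Suc j)" using KS by blast
          then show ?thesis using Y by simp
        qed
      qed
    qed
    then show ?thesis using Smono[of "Suc j" "Suc (Suc j)"] by auto
  qed
  have stab_all: "S (j0 + k) = S j0" if e0: "S (Suc j0) = S j0" for j0 k
  proof -
    have st: "S (Suc (j0 + k)) = S (j0 + k)" for k
    proof (induction k)
      case 0 then show ?case using e0 by simp
    next
      case (Suc k) then show ?case using stab[of "j0 + k"] by simp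
    qed
    show ?thesis
    proof (induction k)
      case 0 then show ?case by simp
    next
      case (Suc k) then show ?case using st[of k] by simp
    qed
  qed
  have dimS: "cv0.dim (S j) \<le> N" for j
  proof -
    let ?D = "{p :: 'n \<times> 'n. fst p \<noteq> snd p}"
    let ?W = "(\<lambda>p. eunit (fst p) (snd p)) ` ?D"
    have "S j \<subseteq> cv0.span ?W"
      unfolding S_def
    proof (rule cv0.span_minimal[OF _ cv0.subspace_span])
      show "(\<Union>i\<in>{..<j}. G i) \<subseteq> cv0.span ?W"
      proof
        fix Y assume "Y \<in> (\<Union>i\<in>{..<j}. G i)"
        then obtain i X where Y: "Y = (?K^^i) (blk_cp L X)" unfolding G_def by auto
        have pc: "proj_c Y = Y"
        proof (cases i)
          case 0 then show ?thesis using Y by (simp add: blk_cp_eq)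
        next
          case (Suc i') then show ?thesis using Y by (simp add: blk_cc_eq)
        qed
        have dz: "dephase Y = 0" using pc dephase_projc[of Y] by simp
        have "\<forall>p\<in>UNIV - ?D. Y $ fst p $ snd p = 0"
        proof
          fix p :: "'n \<times> 'n" assume "p \<in> UNIV - ?D"
          then have "fst p = snd p" by simp
          then have "Y $ fst p $ snd p = dephase Y $ fst p $ snd p" by (simp add: dephase_def)
          then show "Y $ fst p $ snd p = 0" using dz by simp
        qed
        then show "Y \<in> cv0.span ?W" by (rule in_span_sub)
      qed
    qed
    then have "cv0.dim (S j) \<le> card ?W" by (rule cv0.dim_le_card) simp
    also have "card ?W \<le> card ?D" by (rule card_image_le) simp
    also have "\<dots> = N" using card_offdiag N_def by simp
    finally show ?thesis .
  qed
  have grow: "(\<forall>i<j. S (Suc i) \<noteq> S i) \<Longrightarrow> j \<le> cv0.dim (S j)" for j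
  proof (induction j)
    case 0 show ?case by simp
  next
    case (Suc j)
    have "S j \<subset> S (Suc j)" using Smono[of j "Suc j"] Suc.prems by auto
    then have "cv0.dim (S j) < cv0.dim (S (Suc j))"
      using cv.dim_psubset[of "S j" "S (Suc j)"] by (simp add: Sspan)
    moreover have "j \<le> cv0.dim (S j)" using Suc by auto
    ultimately show ?case by simp
  qed
  have "\<exists>j0\<le>N. S (Suc j0) = S j0"
  proof (rule ccontr)
    assume "\<not> (\<exists>j0\<le>N. S (Suc j0) = S j0)"
    then have "\<forall>i<Suc N. S (Suc i) \<noteq> S i" by auto
    from grow[OF this] dimS[of "Suc N"] show False by simp
  qed
  then obtain j0 where j0: "j0 \<le> N" "S (Suc j0) = S j0" by blast
  have allS: "S m \<subseteq> S N" for m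
  proof (cases "m \<le> N")
    case True then show ?thesis by (rule Smono)
  next
    case False
    then have "j0 + (m - j0) = m" using j0(1) by simp
    then have "S m = S j0" using stab_all[OF j0(2), of "m - j0"] by simp
    also have "\<dots> \<subseteq> S N" using Smono j0(1) by simp
    finally show ?thesis .
  qed
  have kill: "S N \<subseteq> {Y. blk_pc L Y = 0}"
    unfolding S_def[of N]
  proof (rule cv0.span_minimal)
    show "(\<Union>i\<in>{..<N}. G i) \<subseteq> {Y. blk_pc L Y = 0}"
      using H unfolding G_def N_def by (auto simp: fun_eq_iff)
    show "cv0.subspace {Y. blk_pc L Y = 0}" unfolding cv0.subspace_def by (simp add: pcadd pcsm pc0)
  qed
  have "(?K^^j) (blk_cp L X) \<in> S (Suc j)" using GS[of j "Suc j"] unfolding G_def by auto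
  then show ?thesis using allS[of "Suc j"] kill by auto
qed

theorem theorem1:
  fixes L :: "'n::finite superop"
  assumes "clinear_superop L"
    and "trace_preserving L"
    and "hermiticity_preserving L"
  shows "NCGD (propagator L) \<longleftrightarrow>
    (\<forall>j \<in> {0..<CARD('n)^2 - CARD('n)}. blk_pc L \<circ> (blk_cc L ^^ j) \<circ> blk_cp L = (\<lambda>X. 0))"
proof -
  have lin: "linear L" by (rule clinear_linear[OF assms(1)])
  have bl: "bounded_linear L" using lin linear_conv_bounded_linear by blast
  have bld: "bounded_linear (dephase :: 'n op \<Rightarrow> 'n op)"
    using linear_dephase linear_conv_bounded_linear by blast
  have blc: "bounded_linear (proj_c :: 'n op \<Rightarrow> 'n op)"
    using linear_projc linear_conv_bounded_linear by blast
  have blg: "bounded_linear (\<lambda>Y. dephase ((L^^a) (proj_c Y)))" for a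
    by (intro bounded_linear_compose[OF bld] bounded_linear_compose[OF bl_funpow[OF bl]] blc)
  have Z_MA: "(\<forall>s u X. 0 \<le> s \<longrightarrow> 0 \<le> u \<longrightarrow> dephase (gexp s L (proj_c (gexp u L (dephase X)))) = 0)
      \<longleftrightarrow> (\<forall>a b X. dephase ((L^^a) (proj_c ((L^^b) (dephase X)))) = 0)"
  proof
    assume Z: "\<forall>s u X. 0 \<le> s \<longrightarrow> 0 \<le> u \<longrightarrow> dephase (gexp s L (proj_c (gexp u L (dephase X)))) = 0"
    have S1: "dephase ((L^^a) (proj_c (gexp u L (dephase X)))) = 0" if u: "u \<ge> 0" for a u X
    proof (rule exp_powser_vanish[where v = "\<lambda>n. dephase ((L^^n) (proj_c (gexp u L (dephase X))))"])
      fix t :: real assume t: "t > 0"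
      show "summable (\<lambda>n. \<bar>t\<bar>^n / fact n * norm (dephase ((L^^n) (proj_c (gexp u L (dephase X))))))"
        by (rule summable_exp_bound[OF bld bl])
      show "(\<Sum>n. (t^n / fact n) *\<^sub>R dephase ((L^^n) (proj_c (gexp u L (dephase X))))) = 0"
        using apply_gexp[OF bld bl, of t "proj_c (gexp u L (dephase X))"] Z t u by simp
    qed
    show "\<forall>a b X. dephase ((L^^a) (proj_c ((L^^b) (dephase X)))) = 0"
    proof (intro allI)
      fix a b X
      show "dephase ((L^^a) (proj_c ((L^^b) (dephase X)))) = 0"
      proof (rule exp_powser_vanish[where v = "\<lambda>n. dephase ((L^^a) (proj_c ((L^^n) (dephase X))))"])
        fix t :: real assume t: "t > 0"
        show "summable (\<lambda>n. \<bar>t\<bar>^n / fact n * norm (dephase ((L^^a) (proj_c ((L^^n) (dephase X))))))"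
          by (rule summable_exp_bound[OF blg bl])
        show "(\<Sum>n. (t^n / fact n) *\<^sub>R dephase ((L^^a) (proj_c ((L^^n) (dephase X))))) = 0"
          using apply_gexp[OF blg[of a] bl, of t "dephase X"] S1[where a=a and u=t and X=X] t by simp
      qed
    qed
  next
    assume MA: "\<forall>a b X. dephase ((L^^a) (proj_c ((L^^b) (dephase X)))) = 0"
    show "\<forall>s u X. 0 \<le> s \<longrightarrow> 0 \<le> u \<longrightarrow> dephase (gexp s L (proj_c (gexp u L (dephase X)))) = 0"
    proof (intro allI impI)
      fix s u :: real and X
      have in0: "dephase ((L^^n) (proj_c (gexp u L (dephase X)))) = 0" for n
        using apply_gexp[OF blg[of n] bl, of u "dephase X"] MA by simp
      show "dephase (gexp s L (proj_c (gexp u L (dephase X)))) = 0"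
        using apply_gexp[OF bld bl, of s "proj_c (gexp u L (dephase X))"] in0 by simp
    qed
  qed
  have MA_Q: "(\<forall>a b X. dephase ((L^^a) (proj_c ((L^^b) (dephase X)))) = 0)
      \<longleftrightarrow> (\<forall>j X. blk_pc L ((blk_cc L ^^ j) (blk_cp L X)) = 0)"
    using paths_A1[OF lin] paths_A2[OF lin] by blast
  have Q_R: "(\<forall>j X. blk_pc L ((blk_cc L ^^ j) (blk_cp L X)) = 0) \<longleftrightarrow>
    (\<forall>j \<in> {0..<CARD('n)^2 - CARD('n)}. blk_pc L \<circ> (blk_cc L ^^ j) \<circ> blk_cp L = (\<lambda>X. 0))"
  proof
    assume "\<forall>j X. blk_pc L ((blk_cc L ^^ j) (blk_cp L X)) = 0"
    then show "\<forall>j \<in> {0..<CARD('n)^2 - CARD('n)}. blk_pc L \<circ> (blk_cc L ^^ j) \<circ> blk_cp L = (\<lambda>X. 0)"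
      by (simp add: fun_eq_iff)
  next
    assume "\<forall>j \<in> {0..<CARD('n)^2 - CARD('n)}. blk_pc L \<circ> (blk_cc L ^^ j) \<circ> blk_cp L = (\<lambda>X. 0)"
    then show "\<forall>j X. blk_pc L ((blk_cc L ^^ j) (blk_cp L X)) = 0"
      using krylov[OF assms(1)] by blast
  qed
  show ?thesis using NCGD_iff_gexp[OF bl] Z_MA MA_Q Q_R by simp
qed

end
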